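(* Let $(X_t)_{t\in Z^m}$ be a definable family of subsets of $R^n$ indexed by $Z^m$. Then $\{X_t:t\in Z^m\}$ is finite. More generally, if $X$ is an $R$-internal definable set and $Y$ is a $Z$-internal definable set (definable in $(Z,R)^{eq}$), then for any definable family $(X_t)_{t\in Y}$ of subsets of $X$, the set $\{X_t:t\in Y\}$ is finite.
   Context: Let $\mathfrak C$ be a monster model, $Z,R$ definable subsets of $\mathfrak C$ which are stably embedded (subsets of $Z^n$, resp. $R^n$, definable with parameters from $\mathfrak C$ are definable with parameters from $Z$, resp. $R$) and fully orthogonal (for all $m,n$, every definable subset of $Z^m\times R^n$ is a finite union of sets $U\times V$ with $U\subseteq Z^m$, $V\subseteq R^n$ definable). $(Z,R)^{eq}$ is the two-sorted structure $(Z,R)$ (no connection between the sorts) expanded by all imaginary sorts; "definable" means definable in $(Z,R)^{eq}$ with parameters. A definable set $X$ is $Z$-internal (resp. $R$-internal) if there is a definable surjection from $Z^k$ (resp. $R^k$) onto $X$ for some $k$. *)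

theory Defs
  imports Main
begin

datatype 'f trm = Var nat | Fn 'f "'f trm list"

datatype ('f, 'r) fm =
    Eq "'f trm" "'f trm"
  | Rel 'r "'f trm list"
  | Neg "('f, 'r) fm"
  | Conj "('f, 'r) fm" "('f, 'r) fm"
  | Ex nat "('f, 'r) fm"

text \<open>A structure with universe UNIV :: 'a is given by interpretations
  F of the function symbols and Rl of the relation symbols.\<close>

fun evalt :: "('f \<Rightarrow> 'a list \<Rightarrow> 'a) \<Rightarrow> (nat \<Rightarrow> 'a) \<Rightarrow> 'f trm \<Rightarrow> 'a" where
  "evalt F v (Var i) = v i"
| "evalt F v (Fn f ts) = F f (map (evalt F v) ts)"

fun sat :: "('f \<Rightarrow> 'a list \<Rightarrow> 'a) \<Rightarrow> ('r \<Rightarrow> 'a list \<Rightarrow> bool) \<Rightarrow> (nat \<Rightarrow> 'a)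
             \<Rightarrow> ('f, 'r) fm \<Rightarrow> bool" where
  "sat F Rl v (Eq s t) = (evalt F v s = evalt F v t)"
| "sat F Rl v (Rel r ts) = Rl r (map (evalt F v) ts)"
| "sat F Rl v (Neg \<phi>) = (\<not> sat F Rl v \<phi>)"
| "sat F Rl v (Conj \<phi> \<psi>) = (sat F Rl v \<phi> \<and> sat F Rl v \<psi>)"
| "sat F Rl v (Ex i \<phi>) = (\<exists>a. sat F Rl (v(i := a)) \<phi>)"

definition env :: "'a list \<Rightarrow> nat \<Rightarrow> 'a" where
  "env xs i = (if i < length xs then xs ! i else undefined)"

definition definable_over ::
  "('f \<Rightarrow> 'a list \<Rightarrow> 'a) \<Rightarrow> ('r \<Rightarrow> 'a list \<Rightarrow> bool) \<Rightarrow> 'a set \<Rightarrow> nat \<Rightarrow> 'a list set \<Rightarrow> bool" where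
  "definable_over F Rl A n S \<longleftrightarrow> S \<subseteq> {xs. length xs = n} \<and>
     (\<exists>(\<phi> :: ('f, 'r) fm) ps. set ps \<subseteq> A \<and>
        (\<forall>xs. length xs = n \<longrightarrow> (xs \<in> S \<longleftrightarrow> sat F Rl (env (xs @ ps)) \<phi>)))"

abbreviation definable where
  "definable F Rl n S \<equiv> definable_over F Rl UNIV n S"

definition lpow :: "'a set \<Rightarrow> nat \<Rightarrow> 'a list set" where
  "lpow A n = {xs. length xs = n \<and> set xs \<subseteq> A}"

definition lprod :: "'a list set \<Rightarrow> 'a list set \<Rightarrow> 'a list set" where
  "lprod A B = {xs @ ys | xs ys. xs \<in> A \<and> ys \<in> B}"

definition stably_embedded where
  "stably_embedded F Rl A \<longleftrightarrow>
     (\<forall>n S. definable F Rl n S \<and> S \<subseteq> lpow A n \<longrightarrow> definable_over F Rl A n S)"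

definition fully_orthogonal where
  "fully_orthogonal F Rl Z R \<longleftrightarrow>
     (\<forall>m n S. definable F Rl (m + n) S \<and> S \<subseteq> lprod (lpow Z m) (lpow R n) \<longrightarrow>
        (\<exists>P. finite P \<and>
           (\<forall>(U, V) \<in> P. definable F Rl m U \<and> U \<subseteq> lpow Z m \<and>
                          definable F Rl n V \<and> V \<subseteq> lpow R n) \<and>
           S = (\<Union>(U, V) \<in> P. lprod U V)))"

text \<open>Product of sorts given by a pattern: True = sort Z, False = sort R.\<close>
definition sortprod :: "'a set \<Rightarrow> 'a set \<Rightarrow> bool list \<Rightarrow> 'a list set" where
  "sortprod Z R pat = {xs. length xs = length pat \<and>
      (\<forall>i < length pat. xs ! i \<in> (if pat ! i then Z else R))}"

text \<open>A definable set of (Z,R)^eq, represented as D // E with D a definable subset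
  of a product of the sorts Z, R and E a definable equivalence relation on D.\<close>
definition eq_set where
  "eq_set F Rl Z R pat D E \<longleftrightarrow>
     D \<subseteq> sortprod Z R pat \<and> definable F Rl (length pat) D \<and> equiv D E \<and>
     definable F Rl (2 * length pat) {x @ y | x y. (x, y) \<in> E}"

text \<open>A-internal: there is a definable surjection from A^k onto D // E
  (its graph is given by the definable preimage G in A^k x D).\<close>
definition internal where
  "internal F Rl Z R A pat D E \<longleftrightarrow> eq_set F Rl Z R pat D E \<and>
     (\<exists>k G. definable F Rl (k + length pat) G \<and> G \<subseteq> lprod (lpow A k) D \<and>
        (\<forall>s \<in> lpow A k. {y. s @ y \<in> G} \<in> D // E) \<and>
        (\<forall>c \<in> D // E. \<exists>s \<in> lpow A k. {y. s @ y \<in> G} = c))"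

definition eq_family where
  "eq_family F Rl pY DY EqY pX DX EqX Xf \<longleftrightarrow>
     (\<forall>t \<in> DY // EqY. Xf t \<subseteq> DX // EqX) \<and>
     definable F Rl (length pY + length pX)
       {y @ x | y x. y \<in> DY \<and> x \<in> DX \<and> EqX `` {x} \<in> Xf (EqY `` {y})}"

end

theory Submission
  imports Defs
begin


definition xenv :: "'a list \<Rightarrow> (nat \<Rightarrow> 'a) \<Rightarrow> nat \<Rightarrow> 'a" where
  "xenv xs w i = (if i < length xs then xs ! i else w (i - length xs))"

fun rent :: "(nat \<Rightarrow> nat) \<Rightarrow> 'f trm \<Rightarrow> 'f trm" where
  "rent \<rho> (Var i) = Var (\<rho> i)"
| "rent \<rho> (Fn f ts) = Fn f (map (rent \<rho>) ts)"

fun ren :: "(nat \<Rightarrow> nat) \<Rightarrow> ('f, 'r) fm \<Rightarrow> ('f, 'r) fm" where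
  "ren \<rho> (Eq s t) = Eq (rent \<rho> s) (rent \<rho> t)"
| "ren \<rho> (Rel r ts) = Rel r (map (rent \<rho>) ts)"
| "ren \<rho> (Neg \<phi>) = Neg (ren \<rho> \<phi>)"
| "ren \<rho> (Conj \<phi> \<psi>) = Conj (ren \<rho> \<phi>) (ren \<rho> \<psi>)"
| "ren \<rho> (Ex i \<phi>) = Ex (\<rho> i) (ren \<rho> \<phi>)"

lemma evalt_rent: "evalt F v (rent \<rho> t) = evalt F (v \<circ> \<rho>) t"
proof (induction t)
  case (Fn f ts)
  have "map (evalt F v) (map (rent \<rho>) ts) = map (evalt F (v \<circ> \<rho>)) ts"
    using Fn.IH by (simp add: comp_def)
  then show ?case by (metis evalt.simps(2) rent.simps(2))
qed simp

lemma sat_ren: "inj \<rho> \<Longrightarrow> sat F Rl v (ren \<rho> \<phi>) = sat F Rl (v \<circ> \<rho>) \<phi>"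
proof (induction \<phi> arbitrary: v)
  case (Ex i \<phi>)
  have "\<And>a. (v(\<rho> i := a)) \<circ> \<rho> = (v \<circ> \<rho>)(i := a)"
    using Ex.prems by (auto simp: fun_eq_iff inj_eq)
  then have "\<And>a. sat F Rl (v(\<rho> i := a)) (ren \<rho> \<phi>) = sat F Rl ((v \<circ> \<rho>)(i := a)) \<phi>"
    using Ex.IH[OF Ex.prems] by metis
  then show ?case by (simp only: ren.simps sat.simps)
qed (auto simp: evalt_rent comp_def)

fun mvt :: "'f trm \<Rightarrow> nat" where
  "mvt (Var i) = Suc i"
| "mvt (Fn f ts) = sum_list (map mvt ts)"

fun mv :: "('f, 'r) fm \<Rightarrow> nat" where
  "mv (Eq s t) = mvt s + mvt t"
| "mv (Rel r ts) = sum_list (map mvt ts)"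
| "mv (Neg \<phi>) = mv \<phi>"
| "mv (Conj \<phi> \<psi>) = mv \<phi> + mv \<psi>"
| "mv (Ex i \<phi>) = Suc i + mv \<phi>"

lemma mvt_le: "t \<in> set ts \<Longrightarrow> mvt t \<le> sum_list (map mvt ts)"
  by (rule member_le_sum_list) auto

lemma evalt_agree: "(\<forall>i < mvt t. v i = v' i) \<Longrightarrow> evalt F v t = evalt F v' t"
proof (induction t)
  case (Fn f ts)
  have "map (evalt F v) ts = map (evalt F v') ts"
  proof (rule map_cong[OF refl])
    fix t assume t: "t \<in> set ts"
    show "evalt F v t = evalt F v' t"
      using Fn.IH[OF t] Fn.prems mvt_le[OF t] by auto
  qed
  then show ?case by (metis evalt.simps(2))
qed simp

lemma sat_agree: "(\<forall>i < mv \<phi>. v i = v' i) \<Longrightarrow> sat F Rl v \<phi> = sat F Rl v' \<phi>"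
proof (induction \<phi> arbitrary: v v')
  case (Eq s t)
  then show ?case using evalt_agree[of s v v' F] evalt_agree[of t v v' F] by simp
next
  case (Rel r ts)
  have "map (evalt F v) ts = map (evalt F v') ts"
  proof (rule map_cong[OF refl])
    fix t assume t: "t \<in> set ts"
    show "evalt F v t = evalt F v' t"
      using evalt_agree[of t v v' F] Rel.prems mvt_le[OF t] by auto
  qed
  then show ?case by (metis sat.simps(2))
next
  case (Ex i \<phi>)
  have "\<And>a. sat F Rl (v(i:=a)) \<phi> = sat F Rl (v'(i:=a)) \<phi>"
    by (rule Ex.IH) (use Ex.prems in auto)
  then show ?case by simp
next
  case (Conj \<phi>1 \<phi>2)
  have "sat F Rl v \<phi>1 = sat F Rl v' \<phi>1" by (rule Conj.IH(1)) (use Conj.prems in auto)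
  moreover have "sat F Rl v \<phi>2 = sat F Rl v' \<phi>2" by (rule Conj.IH(2)) (use Conj.prems in auto)
  ultimately show ?case by simp
next
  case (Neg \<phi>)
  then show ?case by simp
qed

definition dfb :: "('f \<Rightarrow> 'a list \<Rightarrow> 'a) \<Rightarrow> ('r \<Rightarrow> 'a list \<Rightarrow> bool) \<Rightarrow> nat \<Rightarrow> 'a list set \<Rightarrow> bool" where
  "dfb F Rl n S \<longleftrightarrow> (\<exists>(\<phi> :: ('f, 'r) fm) w. \<forall>xs. length xs = n \<longrightarrow> (xs \<in> S \<longleftrightarrow> sat F Rl (xenv xs w) \<phi>))"

lemma env_append: "env (xs @ ps) = xenv xs (env ps)"
  by (auto simp: fun_eq_iff env_def xenv_def nth_append)

lemma definable_iff:
  fixes F :: "'f \<Rightarrow> 'a list \<Rightarrow> 'a" and Rl :: "'r \<Rightarrow> 'a list \<Rightarrow> bool"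
  shows "definable F Rl n S \<longleftrightarrow> S \<subseteq> {xs. length xs = n} \<and> dfb F Rl n S"
proof
  assume "definable F Rl n S"
  then show "S \<subseteq> {xs. length xs = n} \<and> dfb F Rl n S"
    unfolding definable_over_def dfb_def env_append by blast
next
  assume a: "S \<subseteq> {xs. length xs = n} \<and> dfb F Rl n S"
  then obtain \<phi> :: "('f,'r) fm" and w where h: "\<forall>xs. length xs = n \<longrightarrow> (xs \<in> S \<longleftrightarrow> sat F Rl (xenv xs w) \<phi>)"
    unfolding dfb_def by blast
  define ps where "ps = map w [0..<mv \<phi>]"
  have "\<forall>xs. length xs = n \<longrightarrow> (xs \<in> S \<longleftrightarrow> sat F Rl (env (xs @ ps)) \<phi>)"
  proof (intro allI impI)
    fix xs :: "'a list" assume l: "length xs = n"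
    have "sat F Rl (env (xs @ ps)) \<phi> = sat F Rl (xenv xs w) \<phi>"
      by (rule sat_agree) (auto simp: env_def xenv_def nth_append ps_def l)
    then show "(xs \<in> S \<longleftrightarrow> sat F Rl (env (xs @ ps)) \<phi>)" using h l by simp
  qed
  then show "definable F Rl n S" using a unfolding definable_over_def by blast
qed

fun exs :: "nat list \<Rightarrow> ('f, 'r) fm \<Rightarrow> ('f, 'r) fm" where
  "exs [] \<phi> = \<phi>"
| "exs (j # js) \<phi> = Ex j (exs js \<phi>)"

lemma sat_exs: "distinct js \<Longrightarrow>
  sat F Rl v (exs js \<phi>) \<longleftrightarrow> (\<exists>f. sat F Rl (\<lambda>i. if i \<in> set js then f i else v i) \<phi>)"
proof (induction js arbitrary: v)
  case Nil
  then show ?case by simp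
next
  case (Cons j js)
  have jn: "j \<notin> set js" and d: "distinct js" using Cons.prems by auto
  show ?case
  proof
    assume "sat F Rl v (exs (j # js) \<phi>)"
    then obtain a f where "sat F Rl (\<lambda>i. if i \<in> set js then f i else (v(j:=a)) i) \<phi>"
      using Cons.IH[OF d] by auto
    moreover have "(\<lambda>i. if i \<in> set js then f i else (v(j:=a)) i) =
        (\<lambda>i. if i \<in> set (j#js) then (f(j:=a)) i else v i)"
      using jn by (auto simp: fun_eq_iff)
    ultimately show "\<exists>f. sat F Rl (\<lambda>i. if i \<in> set (j # js) then f i else v i) \<phi>" by auto
  next
    assume "\<exists>f. sat F Rl (\<lambda>i. if i \<in> set (j # js) then f i else v i) \<phi>"
    then obtain f where f: "sat F Rl (\<lambda>i. if i \<in> set (j # js) then f i else v i) \<phi>" by blast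
    have "(\<lambda>i. if i \<in> set (j # js) then f i else v i) =
        (\<lambda>i. if i \<in> set js then f i else (v(j:=f j)) i)"
      using jn by (auto simp: fun_eq_iff)
    then have "sat F Rl (v(j := f j)) (exs js \<phi>)" using f Cons.IH[OF d] by auto
    then show "sat F Rl v (exs (j # js) \<phi>)" by auto
  qed
qed

lemma dfb_Int:
  fixes F :: "'f \<Rightarrow> 'a list \<Rightarrow> 'a" and Rl :: "'r \<Rightarrow> 'a list \<Rightarrow> bool"

  assumes "dfb F Rl n A" "dfb F Rl n B" shows "dfb F Rl n (A \<inter> B)"
proof -
  obtain \<phi>A :: "('f,'r) fm" and wA where hA: "\<forall>xs. length xs = n \<longrightarrow> (xs \<in> A \<longleftrightarrow> sat F Rl (xenv xs wA) \<phi>A)"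
    using assms(1) unfolding dfb_def by blast
  obtain \<phi>B :: "('f,'r) fm" and wB where hB: "\<forall>xs. length xs = n \<longrightarrow> (xs \<in> B \<longleftrightarrow> sat F Rl (xenv xs wB) \<phi>B)"
    using assms(2) unfolding dfb_def by blast
  define \<rho>A where "\<rho>A i = (if i < n then i else n + 2 * (i - n))" for i
  define \<rho>B where "\<rho>B i = (if i < n then i else n + 2 * (i - n) + 1)" for i
  define w where "w j = (if even j then wA (j div 2) else wB (j div 2))" for j
  have iA: "inj \<rho>A" unfolding inj_def \<rho>A_def by auto
  have iB: "inj \<rho>B" unfolding inj_def \<rho>B_def by auto
  have "\<forall>xs. length xs = n \<longrightarrow> (xs \<in> A \<inter> B \<longleftrightarrow> sat F Rl (xenv xs w) (Conj (ren \<rho>A \<phi>A) (ren \<rho>B \<phi>B)))"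
  proof (intro allI impI)
    fix xs :: "'a list" assume l: "length xs = n"
    have eA: "xenv xs w \<circ> \<rho>A = xenv xs wA"
      by (auto simp: fun_eq_iff xenv_def \<rho>A_def w_def l)
    have eB: "xenv xs w \<circ> \<rho>B = xenv xs wB"
      by (auto simp: fun_eq_iff xenv_def \<rho>B_def w_def l)
    show "xs \<in> A \<inter> B \<longleftrightarrow> sat F Rl (xenv xs w) (Conj (ren \<rho>A \<phi>A) (ren \<rho>B \<phi>B))"
      using hA hB l by (simp add: sat_ren[OF iA] sat_ren[OF iB] eA eB)
  qed
  then show ?thesis unfolding dfb_def by blast
qed

lemma dfb_pull:
  fixes F :: "'f \<Rightarrow> 'a list \<Rightarrow> 'a" and Rl :: "'r \<Rightarrow> 'a list \<Rightarrow> bool"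

  assumes "dfb F Rl n1 S" "distinct \<sigma>" "length \<sigma> = n1" "\<forall>j \<in> set \<sigma>. j < N"
  shows "dfb F Rl N {v. map ((!) v) \<sigma> \<in> S}"
proof -
  obtain \<phi> :: "('f,'r) fm" and w where h: "\<forall>xs. length xs = n1 \<longrightarrow> (xs \<in> S \<longleftrightarrow> sat F Rl (xenv xs w) \<phi>)"
    using assms(1) unfolding dfb_def by blast
  define \<rho> where "\<rho> i = (if i < n1 then \<sigma> ! i else N + (i - n1))" for i
  have ir: "inj \<rho>"
  proof (rule injI)
    fix x y assume e: "\<rho> x = \<rho> y"
    have lt: "\<And>i. i < n1 \<Longrightarrow> \<sigma> ! i < N" using assms(3,4) by auto
    show "x = y"
    proof (cases "x < n1"; cases "y < n1")
      assume "x < n1" "y < n1" then show ?thesis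
        using e assms(2,3) nth_eq_iff_index_eq unfolding \<rho>_def by fastforce
    qed (use e lt[of x] lt[of y] in \<open>auto simp: \<rho>_def split: if_splits\<close>)
  qed
  have "\<forall>v. length v = N \<longrightarrow> (v \<in> {v. map ((!) v) \<sigma> \<in> S} \<longleftrightarrow> sat F Rl (xenv v w) (ren \<rho> \<phi>))"
  proof (intro allI impI)
    fix v :: "'a list" assume l: "length v = N"
    have lt: "\<And>i. i < n1 \<Longrightarrow> \<sigma> ! i < N" using assms(3,4) by auto
    have e: "xenv v w \<circ> \<rho> = xenv (map ((!) v) \<sigma>) w"
      using lt by (auto simp: fun_eq_iff xenv_def \<rho>_def l assms(3))
    show "v \<in> {v. map ((!) v) \<sigma> \<in> S} \<longleftrightarrow> sat F Rl (xenv v w) (ren \<rho> \<phi>)"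
      using h by (simp add: sat_ren[OF ir] e assms(3))
  qed
  then show ?thesis unfolding dfb_def by blast
qed

lemma dfb_proj:
  fixes F :: "'f \<Rightarrow> 'a list \<Rightarrow> 'a" and Rl :: "'r \<Rightarrow> 'a list \<Rightarrow> bool"

  assumes "dfb F Rl (n + m) A"
  shows "dfb F Rl n {xs. \<exists>ys. length ys = m \<and> xs @ ys \<in> A}"
proof -
  obtain \<phi> :: "('f,'r) fm" and w where h: "\<forall>xs. length xs = n + m \<longrightarrow> (xs \<in> A \<longleftrightarrow> sat F Rl (xenv xs w) \<phi>)"
    using assms(1) unfolding dfb_def by blast
  define \<rho> where "\<rho> i = (if i < n then i else if i < n + m then n + 2 * (i - n)
      else n + 2 * (i - n - m) + 1)" for i
  define js where "js = map (\<lambda>i. n + 2 * i) [0..<m]"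
  define w' where "w' j = w (j div 2)" for j
  have ir: "inj \<rho>"
  proof (rule injI)
    fix x y assume "\<rho> x = \<rho> y"
    then show "x = y" unfolding \<rho>_def by (auto split: if_splits) presburger+
  qed
  have dj: "distinct js" unfolding js_def by (auto simp: distinct_map inj_on_def)
  have "\<forall>xs. length xs = n \<longrightarrow> (xs \<in> {xs. \<exists>ys. length ys = m \<and> xs @ ys \<in> A} \<longleftrightarrow>
          sat F Rl (xenv xs w') (exs js (ren \<rho> \<phi>)))"
  proof (intro allI impI)
    fix xs :: "'a list" assume l: "length xs = n"
    have key: "(\<lambda>i. if i \<in> set js then f i else xenv xs w' i) \<circ> \<rho> =
        xenv (xs @ map (\<lambda>i. f (n + 2 * i)) [0..<m]) w" for f
    proof
      fix i
      show "((\<lambda>i. if i \<in> set js then f i else xenv xs w' i) \<circ> \<rho>) i =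
        xenv (xs @ map (\<lambda>i. f (n + 2 * i)) [0..<m]) w i"
      proof (cases "i < n")
        case True then show ?thesis
          by (auto simp: xenv_def \<rho>_def js_def l nth_append)
      next
        case False
        show ?thesis
        proof (cases "i < n + m")
          case True
          then have "\<rho> i \<in> set js" using False unfolding \<rho>_def js_def by auto
          then show ?thesis using True False by (auto simp: xenv_def \<rho>_def l nth_append)
        next
          case F2: False
          have "\<rho> i \<notin> set js" using False F2 unfolding \<rho>_def js_def by auto presburger
          moreover have "(2 * (i - n - m) + 1) div 2 = i - (n + m)" by simp
          ultimately show ?thesis using False F2
            by (auto simp: xenv_def \<rho>_def l nth_append w'_def)
        qed
      qed
    qed
    show "xs \<in> {xs. \<exists>ys. length ys = m \<and> xs @ ys \<in> A} \<longleftrightarrow> sat F Rl (xenv xs w') (exs js (ren \<rho> \<phi>))"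
    proof
      assume "xs \<in> {xs. \<exists>ys. length ys = m \<and> xs @ ys \<in> A}"
      then obtain ys where ys: "length ys = m" "xs @ ys \<in> A" by blast
      define f where "f j = ys ! ((j - n) div 2)" for j
      have "map (\<lambda>i. f (n + 2 * i)) [0..<m] = ys"
        by (rule nth_equalityI) (auto simp: f_def ys)
      then have "sat F Rl ((\<lambda>i. if i \<in> set js then f i else xenv xs w' i) \<circ> \<rho>) \<phi>"
        using key[of f] h ys l by simp
      then show "sat F Rl (xenv xs w') (exs js (ren \<rho> \<phi>))"
        using sat_exs[OF dj] sat_ren[OF ir] by blast
    next
      assume "sat F Rl (xenv xs w') (exs js (ren \<rho> \<phi>))"
      then obtain f where "sat F Rl ((\<lambda>i. if i \<in> set js then f i else xenv xs w' i) \<circ> \<rho>) \<phi>"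
        using sat_exs[OF dj] sat_ren[OF ir] by blast
      then have "xs @ map (\<lambda>i. f (n + 2 * i)) [0..<m] \<in> A" using key[of f] h l by simp
      then show "xs \<in> {xs. \<exists>ys. length ys = m \<and> xs @ ys \<in> A}" by force
    qed
  qed
  then show ?thesis unfolding dfb_def by blast
qed



lemma lprod_mem:
  assumes "A \<subseteq> {xs. length xs = l}" "length s = l"
  shows "s @ y \<in> lprod A B \<longleftrightarrow> s \<in> A \<and> y \<in> B"
proof
  assume "s @ y \<in> lprod A B"
  then obtain s' y' where "s @ y = s' @ y'" "s' \<in> A" "y' \<in> B" unfolding lprod_def by blast
  moreover have "length s' = l" using assms \<open>s' \<in> A\<close> by auto
  ultimately show "s \<in> A \<and> y \<in> B" using assms(2) by (simp add: append_eq_append_conv)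
qed (auto simp: lprod_def)

lemma lpow_len: "lpow A n \<subseteq> {xs. length xs = n}" by (auto simp: lpow_def)

lemma seg: "length pre = p \<Longrightarrow> q = p + length mid \<Longrightarrow> map ((!) (pre @ mid @ suf)) [p..<q] = mid"
  by (rule nth_equalityI) (auto simp: nth_append)

lemma part1:
  fixes F :: "'f \<Rightarrow> 'a list \<Rightarrow> 'a" and Rl :: "'r \<Rightarrow> 'a list \<Rightarrow> bool"
  assumes fo: "fully_orthogonal F Rl Z R"
    and sub: "\<forall>t \<in> lpow Z m. Xt t \<subseteq> lpow R n"
    and df: "definable F Rl (m + n) (\<Union>t \<in> lpow Z m. lprod {t} (Xt t))"
  shows "finite (Xt ` lpow Z m)"
proof -
  let ?S = "\<Union>t \<in> lpow Z m. lprod {t} (Xt t)"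
  have Ssub: "?S \<subseteq> lprod (lpow Z m) (lpow R n)"
  proof
    fix v assume "v \<in> ?S"
    then obtain t y where "t \<in> lpow Z m" "y \<in> Xt t" "v = t @ y" unfolding lprod_def by blast
    then show "v \<in> lprod (lpow Z m) (lpow R n)" using sub unfolding lprod_def by blast
  qed
  have "\<exists>P. finite P \<and> (\<forall>(U, V) \<in> P. definable F Rl m U \<and> U \<subseteq> lpow Z m \<and>
                          definable F Rl n V \<and> V \<subseteq> lpow R n) \<and> ?S = (\<Union>(U, V) \<in> P. lprod U V)"
    using fo[unfolded fully_orthogonal_def, rule_format, OF conjI[OF df Ssub]] .
  then obtain P where P: "finite P" "\<forall>(U, V) \<in> P. definable F Rl m U \<and> U \<subseteq> lpow Z m \<and>
                          definable F Rl n V \<and> V \<subseteq> lpow R n" "?S = (\<Union>(U, V) \<in> P. lprod U V)"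
    by blast
  define g where "g Q = {y. \<exists>p \<in> Q. y \<in> snd p}" for Q :: "('a list set \<times> 'a list set) set"
  have "Xt t = g {p \<in> P. t \<in> fst p}" if t: "t \<in> lpow Z m" for t
  proof -
    have lt: "length t = m" using t by (auto simp: lpow_def)
    have e1: "y \<in> Xt t \<longleftrightarrow> t @ y \<in> ?S" for y
    proof
      assume "t @ y \<in> ?S"
      then obtain t' where t': "t' \<in> lpow Z m" "t @ y \<in> lprod {t'} (Xt t')" by blast
      have "length t' = m" using t' by (auto simp: lpow_def)
      then show "y \<in> Xt t" using lprod_mem[of "{t'}" m t y "Xt t'"] t' lt by auto
    next
      assume "y \<in> Xt t"
      then have "t @ y \<in> lprod {t} (Xt t)" unfolding lprod_def by blast
      then show "t @ y \<in> ?S" using t by blast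
    qed
    have e2: "t @ y \<in> ?S \<longleftrightarrow> (\<exists>p \<in> P. t \<in> fst p \<and> y \<in> snd p)" for y
    proof -
      have "t @ y \<in> lprod U V \<longleftrightarrow> t \<in> U \<and> y \<in> V" if "(U, V) \<in> P" for U V
      proof -
        have "U \<subseteq> lpow Z m" using bspec[OF P(2) that] by simp
        then have "U \<subseteq> {xs. length xs = m}" using lpow_len[of Z m] by blast
        then show ?thesis using lprod_mem[of U m t y V] lt by simp
      qed
      then show ?thesis unfolding P(3) by force
    qed
    show ?thesis unfolding g_def using e1 e2 by blast
  qed
  then have "Xt ` lpow Z m \<subseteq> g ` Pow P" by auto
  then show ?thesis using P(1) finite_subset by blast
qed



lemma class_of_mem:
  assumes "equiv D E" "c \<in> D // E" "y \<in> c" shows "E `` {y} = c"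
proof -
  obtain y0 where "c = E `` {y0}" "y0 \<in> D" using assms(2) by (rule quotientE)
  then show ?thesis using assms(1,3) equiv_class_eq[of D E y0 y] by auto
qed

lemma class_ne:
  assumes "equiv D E" "c \<in> D // E" obtains y where "y \<in> c" "y \<in> D"
proof -
  obtain y0 where "c = E `` {y0}" "y0 \<in> D" using assms(2) by (rule quotientE)
  then show ?thesis using that equiv_class_self[OF assms(1)] by blast
qed

lemma class_sub: "equiv D E \<Longrightarrow> c \<in> D // E \<Longrightarrow> c \<subseteq> D"
  by (auto elim!: quotientE dest: equiv_type)

lemma dfb_len:
  "dfb F Rl n A \<Longrightarrow> dfb F Rl n ({xs. length xs = n} \<inter> A)"
  unfolding dfb_def by auto

lemma part2:
  fixes F :: "'f \<Rightarrow> 'a list \<Rightarrow> 'a" and Rl :: "'r \<Rightarrow> 'a list \<Rightarrow> bool"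
  assumes fo: "fully_orthogonal F Rl Z R"
    and iX: "internal F Rl Z R R pX DX EqX" and iY: "internal F Rl Z R Z pY DY EqY"
    and fam: "eq_family F Rl pY DY EqY pX DX EqX Xf"
  shows "finite (Xf ` (DY // EqY))"
proof -
  define a where "a = length pY"
  define b where "b = length pX"
  have eqX: "equiv DX EqX" and DXl: "\<And>x. x \<in> DX \<Longrightarrow> length x = b"
    using iX unfolding internal_def eq_set_def sortprod_def b_def by auto
  have eqY: "equiv DY EqY" and DYl: "\<And>x. x \<in> DY \<Longrightarrow> length x = a"
    using iY unfolding internal_def eq_set_def sortprod_def a_def by auto
  obtain k G where G: "definable F Rl (k + b) G" "G \<subseteq> lprod (lpow R k) DX"
      "\<forall>s \<in> lpow R k. {y. s @ y \<in> G} \<in> DX // EqX"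
      "\<forall>c \<in> DX // EqX. \<exists>s \<in> lpow R k. {y. s @ y \<in> G} = c"
    using iX unfolding internal_def b_def by blast
  obtain l H where H: "definable F Rl (l + a) H" "H \<subseteq> lprod (lpow Z l) DY"
      "\<forall>s \<in> lpow Z l. {y. s @ y \<in> H} \<in> DY // EqY"
      "\<forall>c \<in> DY // EqY. \<exists>s \<in> lpow Z l. {y. s @ y \<in> H} = c"
    using iY unfolding internal_def a_def by blast
  define W where "W = {y @ x | y x. y \<in> DY \<and> x \<in> DX \<and> EqX `` {x} \<in> Xf (EqY `` {y})}"
  have W: "definable F Rl (a + b) W" and famsub: "\<forall>t \<in> DY // EqY. Xf t \<subseteq> DX // EqX"
    using fam unfolding eq_family_def W_def a_def b_def by auto
  have Wmem: "y @ x \<in> W \<longleftrightarrow> y \<in> DY \<and> x \<in> DX \<and> EqX `` {x} \<in> Xf (EqY `` {y})"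
    if "length y = a" for y x
  proof
    assume "y @ x \<in> W"
    then obtain y' x' where e: "y @ x = y' @ x'" "y' \<in> DY" "x' \<in> DX" "EqX `` {x'} \<in> Xf (EqY `` {y'})"
      unfolding W_def by blast
    have "length y' = a" using DYl e(2) by simp
    then have "y = y' \<and> x = x'" using e(1) that by (simp add: append_eq_append_conv)
    then show "y \<in> DY \<and> x \<in> DX \<and> EqX `` {x} \<in> Xf (EqY `` {y})" using e by simp
  qed (auto simp: W_def)
  define N where "N = l + k + (a + b)"
  define \<sigma>H where "\<sigma>H = [0..<l] @ [l+k..<l+k+a]"
  define \<sigma>G where "\<sigma>G = [l..<l+k] @ [l+k+a..<l+k+(a+b)]"
  define \<sigma>W where "\<sigma>W = [l+k..<l+k+(a+b)]"
  define T where "T = {v. map ((!) v) \<sigma>H \<in> H} \<inter> {v. map ((!) v) \<sigma>G \<in> G} \<inter> {v. map ((!) v) \<sigma>W \<in> W}"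
  have dH: "dfb F Rl (l + a) H" using H(1) definable_iff by blast
  have dG: "dfb F Rl (k + b) G" using G(1) definable_iff by blast
  have dW: "dfb F Rl (a + b) W" using W definable_iff by blast
  have dT: "dfb F Rl N T"
    unfolding T_def
    apply (intro dfb_Int)
      apply (rule dfb_pull[OF dH]; force simp: \<sigma>H_def N_def)
     apply (rule dfb_pull[OF dG]; force simp: \<sigma>G_def N_def)
    apply (rule dfb_pull[OF dW]; force simp: \<sigma>W_def N_def)
    done
  have Tch: "s @ r @ y @ x \<in> T \<longleftrightarrow> s @ y \<in> H \<and> r @ x \<in> G \<and> y @ x \<in> W"
    if l: "length s = l" "length r = k" "length y = a" "length x = b" for s r y x
  proof -
    have h1: "map ((!) (s@r@y@x)) [0..<l] = s" using seg[of "[]" 0 "l" s "r@y@x"] l by simp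
    have h2: "map ((!) (s@r@y@x)) [l..<l+k] = r" using seg[of s l "l+k" r "y@x"] l by simp
    have h3: "map ((!) (s@r@y@x)) [l+k..<l+k+a] = y" using seg[of "s@r" "l+k" "l+k+a" y x] l by simp
    have h4: "map ((!) (s@r@y@x)) [l+k+a..<l+k+(a+b)] = x"
      using seg[of "s@r@y" "l+k+a" "l+k+(a+b)" x "[]"] l by simp
    have h5: "map ((!) (s@r@y@x)) [l+k..<l+k+(a+b)] = y@x"
      using seg[of "s@r" "l+k" "l+k+(a+b)" "y@x" "[]"] l by simp
    show ?thesis unfolding T_def \<sigma>H_def \<sigma>G_def \<sigma>W_def
      by (simp only: map_append h1 h2 h3 h4 h5 Int_iff mem_Collect_eq conj_assoc)
  qed
  define S0 where "S0 = {u. length u = l + k} \<inter> {u. \<exists>z. length z = a + b \<and> u @ z \<in> T}"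
  have dS0: "dfb F Rl (l + k) S0" unfolding S0_def
    by (rule dfb_len, rule dfb_proj) (use dT in \<open>simp add: N_def\<close>)
  have S0ch: "s @ r \<in> S0 \<longleftrightarrow> (\<exists>y x. length y = a \<and> length x = b \<and> s @ y \<in> H \<and> r @ x \<in> G \<and> y @ x \<in> W)"
    if l: "length s = l" "length r = k" for s r
  proof
    assume "s @ r \<in> S0"
    then obtain z where z: "length z = a + b" "s @ r @ z \<in> T" unfolding S0_def by auto
    have "z = take a z @ drop a z" by simp
    then have "s @ r @ take a z @ drop a z \<in> T" using z by metis
    then have m: "s @ take a z \<in> H \<and> r @ drop a z \<in> G \<and> take a z @ drop a z \<in> W"
      using Tch[of s r "take a z" "drop a z"] l z(1) by simp
    have "length (take a z) = a" "length (drop a z) = b" using z(1) by auto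
    then show "\<exists>y x. length y = a \<and> length x = b \<and> s @ y \<in> H \<and> r @ x \<in> G \<and> y @ x \<in> W"
      using m by blast
  next
    assume "\<exists>y x. length y = a \<and> length x = b \<and> s @ y \<in> H \<and> r @ x \<in> G \<and> y @ x \<in> W"
    then obtain y x where yx: "length y = a" "length x = b" "s @ y \<in> H" "r @ x \<in> G" "y @ x \<in> W" by blast
    then have "(s @ r) @ (y @ x) \<in> T" using Tch[of s r y x] l by simp
    then show "s @ r \<in> S0" unfolding S0_def using l yx(1,2) by force
  qed
  have ZH: "s \<in> lpow Z l" if "length s = l" "s @ y \<in> H" for s y
    using that H(2) lprod_mem[of "lpow Z l" l s y DY] lpow_len[of Z l] by blast
  have RG: "r \<in> lpow R k" if "length r = k" "r @ x \<in> G" for r x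
    using that G(2) lprod_mem[of "lpow R k" k r x DX] lpow_len[of R k] by blast
  have S0sub: "S0 \<subseteq> lprod (lpow Z l) (lpow R k)"
  proof
    fix u assume u: "u \<in> S0"
    have lu: "length u = l + k" using u unfolding S0_def by simp
    define s where "s = take l u"
    define r where "r = drop l u"
    have ur: "u = s @ r" unfolding s_def r_def by simp
    have ls: "length s = l" "length r = k" using lu unfolding s_def r_def by auto
    obtain y x where "s @ y \<in> H" "r @ x \<in> G" using S0ch[OF ls] u ur by blast
    then have "s \<in> lpow Z l" "r \<in> lpow R k" using ZH RG ls by auto
    then show "u \<in> lprod (lpow Z l) (lpow R k)" unfolding ur lprod_def by blast
  qed
  have S0def: "definable F Rl (l + k) S0"
    using definable_iff dS0 S0_def by blast
  have "\<exists>P. finite P \<and> (\<forall>(U, V) \<in> P. definable F Rl l U \<and> U \<subseteq> lpow Z l \<and>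
                          definable F Rl k V \<and> V \<subseteq> lpow R k) \<and> S0 = (\<Union>(U, V) \<in> P. lprod U V)"
    using fo[unfolded fully_orthogonal_def, rule_format, OF conjI[OF S0def S0sub]] .
  then obtain P where P: "finite P" "\<forall>(U, V) \<in> P. definable F Rl l U \<and> U \<subseteq> lpow Z l \<and>
                          definable F Rl k V \<and> V \<subseteq> lpow R k" "S0 = (\<Union>(U, V) \<in> P. lprod U V)"
    by blast
  have S0P: "s @ r \<in> S0 \<longleftrightarrow> (\<exists>p \<in> P. s \<in> fst p \<and> r \<in> snd p)" if ls: "length s = l" for s r
  proof -
    have "s @ r \<in> lprod U V \<longleftrightarrow> s \<in> U \<and> r \<in> V" if "(U, V) \<in> P" for U V
    proof -
      have "U \<subseteq> lpow Z l" using bspec[OF P(2) that] by simp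
      then have "U \<subseteq> {xs. length xs = l}" using lpow_len[of Z l] by blast
      then show ?thesis using lprod_mem[of U l s r V] ls by simp
    qed
    then show ?thesis unfolding P(3) by force
  qed
  define g where "g Q = {e \<in> DX // EqX. \<exists>r \<in> lpow R k. {x. r @ x \<in> G} = e \<and> (\<exists>p \<in> Q. r \<in> snd p)}"
    for Q :: "('a list set \<times> 'a list set) set"
  have key: "Xf c = g {p \<in> P. s \<in> fst p}"
    if c: "c \<in> DY // EqY" and s: "s \<in> lpow Z l" "{y. s @ y \<in> H} = c" for c s
  proof -
    have ls: "length s = l" using s(1) by (auto simp: lpow_def)
    have ev: "e \<in> Xf c \<longleftrightarrow> s @ r \<in> S0"
      if e: "e \<in> DX // EqX" and r: "r \<in> lpow R k" "{x. r @ x \<in> G} = e" for e r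
    proof
      have lr: "length r = k" using r(1) by (auto simp: lpow_def)
      assume ec: "e \<in> Xf c"
      obtain y where y: "y \<in> c" "y \<in> DY" using class_ne[OF eqY c] by blast
      obtain x where x: "x \<in> e" "x \<in> DX" using class_ne[OF eqX e] by blast
      have "EqY `` {y} = c" using class_of_mem[OF eqY c y(1)] .
      moreover have "EqX `` {x} = e" using class_of_mem[OF eqX e x(1)] .
      ultimately have "y @ x \<in> W" using Wmem[of y x] DYl y x ec by simp
      moreover have "s @ y \<in> H" using y s(2) by blast
      moreover have "r @ x \<in> G" using x r(2) by blast
      ultimately show "s @ r \<in> S0" using S0ch[OF ls lr] DYl DXl x y by blast
    next
      have lr: "length r = k" using r(1) by (auto simp: lpow_def)
      assume "s @ r \<in> S0"
      then obtain y x where yx: "length y = a" "length x = b" "s @ y \<in> H" "r @ x \<in> G" "y @ x \<in> W"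
        using S0ch[OF ls lr] by blast
      have y: "y \<in> c" using yx(3) s(2) by blast
      have x: "x \<in> e" using yx(4) r(2) by blast
      have "EqX `` {x} \<in> Xf (EqY `` {y})" using Wmem[OF yx(1)] yx(5) by blast
      then show "e \<in> Xf c" using class_of_mem[OF eqY c y] class_of_mem[OF eqX e x] by simp
    qed
    show ?thesis
    proof
      show "Xf c \<subseteq> g {p \<in> P. s \<in> fst p}"
      proof
        fix e assume ec: "e \<in> Xf c"
        have e: "e \<in> DX // EqX" using famsub c ec by blast
        obtain r where r: "r \<in> lpow R k" "{x. r @ x \<in> G} = e" using G(4) e by blast
        have "s @ r \<in> S0" using ev[OF e r] ec by blast
        then obtain p where "p \<in> P" "s \<in> fst p" "r \<in> snd p" using S0P[OF ls] by blast
        then show "e \<in> g {p \<in> P. s \<in> fst p}" unfolding g_def using e r by blast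
      qed
    next
      show "g {p \<in> P. s \<in> fst p} \<subseteq> Xf c"
      proof
        fix e assume "e \<in> g {p \<in> P. s \<in> fst p}"
        then obtain r p where e: "e \<in> DX // EqX" and r: "r \<in> lpow R k" "{x. r @ x \<in> G} = e"
          and p: "p \<in> P" "s \<in> fst p" "r \<in> snd p" unfolding g_def by blast
        have "s @ r \<in> S0" using S0P[OF ls] p by blast
        then show "e \<in> Xf c" using ev[OF e r] by blast
      qed
    qed
  qed
  have "Xf ` (DY // EqY) \<subseteq> g ` Pow P"
  proof
    fix X assume "X \<in> Xf ` (DY // EqY)"
    then obtain c where c: "c \<in> DY // EqY" "X = Xf c" by blast
    obtain s where s: "s \<in> lpow Z l" "{y. s @ y \<in> H} = c" using H(4) c(1) by blast
    show "X \<in> g ` Pow P" using key[OF c(1) s] c(2) by blast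
  qed
  then show ?thesis using P(1) finite_subset by blast
qed

theorem lemma2p2:
  fixes F :: "'f \<Rightarrow> 'a list \<Rightarrow> 'a" and Rl :: "'r \<Rightarrow> 'a list \<Rightarrow> bool"
    and Z R :: "'a set"
  assumes "definable F Rl 1 {[z] | z. z \<in> Z}"
    and "definable F Rl 1 {[r] | r. r \<in> R}"
    and "stably_embedded F Rl Z"
    and "stably_embedded F Rl R"
    and "fully_orthogonal F Rl Z R"
  shows "(\<forall>m n (Xt :: 'a list \<Rightarrow> 'a list set).
            (\<forall>t \<in> lpow Z m. Xt t \<subseteq> lpow R n) \<and>
            definable F Rl (m + n) (\<Union>t \<in> lpow Z m. lprod {t} (Xt t))
            \<longrightarrow> finite (Xt ` lpow Z m))
       \<and> (\<forall>pX DX EqX pY DY EqY (Xf :: 'a list set \<Rightarrow> 'a list set set).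
            internal F Rl Z R R pX DX EqX \<and> internal F Rl Z R Z pY DY EqY \<and>
            eq_family F Rl pY DY EqY pX DX EqX Xf
            \<longrightarrow> finite (Xf ` (DY // EqY)))"
proof (intro conjI allI impI)
  fix m n and Xt :: "'a list \<Rightarrow> 'a list set"
  assume h: "(\<forall>t \<in> lpow Z m. Xt t \<subseteq> lpow R n) \<and>
            definable F Rl (m + n) (\<Union>t \<in> lpow Z m. lprod {t} (Xt t))"
  show "finite (Xt ` lpow Z m)" using part1[OF assms(5)] h by blast
next
  fix pX DX EqX pY DY EqY and Xf :: "'a list set \<Rightarrow> 'a list set set"
  assume h: "internal F Rl Z R R pX DX EqX \<and> internal F Rl Z R Z pY DY EqY \<and>
            eq_family F Rl pY DY EqY pX DX EqX Xf"
  show "finite (Xf ` (DY // EqY))" using part2[OF assms(5)] h by blast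
qed

end
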